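(* Let $p>1$, $s\ge r\ge2$, let $Q$ be an $s$-vertex $r$-graph and let $\mathcal P$ be a hereditary property of $r$-graphs with $\lambda^{(p)}(Q,\mathcal P)>0$. Writing $\lambda_n^{(p)}=\lambda^{(p)}(Q,\mathcal P_n)$, there exist infinitely many $n$ such that $$\frac{\lambda_{n-1}^{(p)}(n-1)^{s/p}}{(n-1)_s}-\frac{\lambda_n^{(p)}n^{s/p}}{(n)_s}<\frac{1}{n\log n}\cdot\frac{\lambda_n^{(p)}n^{s/p}}{(n)_s},$$ where $(m)_s=m(m-1)\cdots(m-s+1)$.
   Context: An $r$-graph ($r\ge 2$) is a finite hypergraph all of whose edges have exactly $r$ vertices. For $I\subseteq V(H)$, $H[I]$ denotes the induced subhypergraph on $I$. For an $s$-vertex $r$-graph $Q$ and an $r$-graph $H$, $\mathcal N(Q,H)$ is the number of (not necessarily induced) subgraphs of $H$ isomorphic to $Q$. For an $n$-vertex $r$-graph $H$ with vertex set $[n]$ and $\mathbf x\in\mathbb R^n$, $P_{Q,H}(\mathbf x)=s!\sum_{\{i_1,\dots,i_s\}\in\binom{[n]}{s}}\mathcal N(Q,H[\{i_1,\dots,i_s\}])\,x_{i_1}\cdots x_{i_s}$, and for $p\ge1$, $\lambda^{(p)}(Q,H)=\max_{\|\mathbf x\|_p=1}P_{Q,H}(\mathbf x)$. A hereditary property $\mathcal P$ of $r$-graphs is a family of $r$-graphs closed under isomorphism and under taking induced subgraphs; as a standing assumption, whenever $H\in\mathcal P$, the disjoint union of $H$ with an isolated vertex is also in $\mathcal P$.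 $\mathcal P_n$ is the set of members of $\mathcal P$ with $n$ vertices; $\lambda^{(p)}(Q,\mathcal P_n)=\max\{\lambda^{(p)}(Q,H):H\in\mathcal P_n\}$ and $\lambda^{(p)}(Q,\mathcal P)=\lim_{n\to\infty}\lambda^{(p)}(Q,\mathcal P_n)n^{s/p-s}$ (this limit exists). Here $\log$ is the natural logarithm. *)

theory Defs
  imports Complex_Main
begin

definition is_rgraph :: "nat \<Rightarrow> nat \<Rightarrow> nat set set \<Rightarrow> bool" where
  "is_rgraph r n E \<longleftrightarrow> (\<forall>e\<in>E. e \<subseteq> {0..<n} \<and> card e = r)"

definition induced_edges :: "nat set set \<Rightarrow> nat set \<Rightarrow> nat set set" where
  "induced_edges E I = {e \<in> E. e \<subseteq> I}"

text \<open>Hereditary: every member is an r-graph; closed under isomorphism and induced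
  subgraphs (combined: pulling back the induced subgraph on an m-subset of [n]
  along an injection [m] -> [n]); and closed under adding an isolated vertex.\<close>
definition hereditary :: "nat \<Rightarrow> (nat \<times> nat set set) set \<Rightarrow> bool" where
  "hereditary r P \<longleftrightarrow>
     (\<forall>n E. (n, E) \<in> P \<longrightarrow> is_rgraph r n E) \<and>
     (\<forall>n E m f. (n, E) \<in> P \<and> inj_on f {0..<m} \<and> f ` {0..<m} \<subseteq> {0..<n} \<longrightarrow>
        (m, {e. e \<subseteq> {0..<m} \<and> f ` e \<in> E}) \<in> P) \<and>
     (\<forall>n E. (n, E) \<in> P \<longrightarrow> (Suc n, E) \<in> P)"

text \<open>N(Q, H[I]) for |I| = s: number of subgraphs of H[I] with vertex set I isomorphic
  to Q (Q an s-vertex r-graph on [s] with edge set EQ).\<close>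
definition copies :: "nat \<Rightarrow> nat set set \<Rightarrow> nat set set \<Rightarrow> nat set \<Rightarrow> nat" where
  "copies s EQ E I = card {F. F \<subseteq> induced_edges E I \<and>
      (\<exists>f. bij_betw f {0..<s} I \<and> F = (\<lambda>e. f ` e) ` EQ)}"

definition PQH :: "nat \<Rightarrow> nat set set \<Rightarrow> nat \<Rightarrow> nat set set \<Rightarrow> (nat \<Rightarrow> real) \<Rightarrow> real" where
  "PQH s EQ n E x = fact s * (\<Sum>I \<in> {I. I \<subseteq> {0..<n} \<and> card I = s}.
       real (copies s EQ E I) * (\<Prod>i\<in>I. x i))"

definition lamH :: "real \<Rightarrow> nat \<Rightarrow> nat set set \<Rightarrow> nat \<Rightarrow> nat set set \<Rightarrow> real" where
  "lamH p s EQ n E = Sup {PQH s EQ n E x | x. (\<Sum>i<n. \<bar>x i\<bar> powr p) = 1}"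

definition lamPn :: "real \<Rightarrow> nat \<Rightarrow> nat set set \<Rightarrow> (nat \<times> nat set set) set \<Rightarrow> nat \<Rightarrow> real" where
  "lamPn p s EQ P n = Sup {lamH p s EQ n E | E. (n, E) \<in> P}"

definition lamP :: "real \<Rightarrow> nat \<Rightarrow> nat set set \<Rightarrow> (nat \<times> nat set set) set \<Rightarrow> real" where
  "lamP p s EQ P = lim (\<lambda>n. lamPn p s EQ P n * real n powr (real s / p - real s))"

definition falling :: "nat \<Rightarrow> nat \<Rightarrow> real" where
  "falling m s = (\<Prod>i<s. real m - real i)"

end

theory Submission
  imports Defs "HOL-Analysis.Analysis"
begin

lemma div_harm_ln: "\<not> summable (\<lambda>n::nat. 1 / (real n * ln (real n)))"
proof
  assume S: "summable (\<lambda>n::nat. 1 / (real n * ln (real n)))"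
  define g where "g n = 1 / (real (max n 2) * ln (real (max n 2)))" for n :: nat
  have "eventually (\<lambda>n. 1 / (real n * ln (real n)) = g n) sequentially"
    using eventually_ge_at_top[of "2::nat"] by eventually_elim (simp add: g_def max_def)
  then have Sg: "summable g" using S summable_cong[of "\<lambda>n. 1 / (real n * ln (real n))" g] by simp
  have mono: "g (Suc m) \<le> g m" if "0 < m" for m
  proof -
    have a: "real (max m 2) \<le> real (max (Suc m) 2)" by simp
    have b: "ln (real (max m 2)) \<le> ln (real (max (Suc m) 2))" by simp
    have c: "0 < real (max m 2) * ln (real (max m 2))"
      by (intro mult_pos_pos) auto
    have "real (max m 2) * ln (real (max m 2)) \<le> real (max (Suc m) 2) * ln (real (max (Suc m) 2))"
      by (intro mult_mono a b) auto
    then show ?thesis unfolding g_def using c by (intro divide_left_mono) auto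
  qed
  have nonneg: "g n \<ge> 0" for n unfolding g_def by (intro divide_nonneg_pos mult_pos_pos) auto
  have "summable (\<lambda>n. 2^n * g (2^n))" using condensation_test[of g] mono nonneg Sg by blast
  moreover have "eventually (\<lambda>n. 2^n * g (2^n) = (1 / ln 2) * inverse (real n)) sequentially"
    using eventually_ge_at_top[of "1::nat"]
  proof eventually_elim
    case (elim n)
    have "(2::nat) \<le> 2 ^ n" using elim by (metis power_one_right power_increasing_iff one_less_numeral_iff semiring_norm(76))
    then have "max (2^n) 2 = (2::nat)^n" by simp
    then have "g (2^n) = 1 / (2^n * (real n * ln 2))" unfolding g_def by (simp add: ln_realpow)
    then show ?case using elim by (simp add: field_simps)
  qed
  ultimately have "summable (\<lambda>n. (1 / ln 2) * inverse (real n))"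
    using summable_cong[of "\<lambda>n. 2^n * g (2^n)" "\<lambda>n. (1 / ln 2) * inverse (real n)"] by simp
  then have "summable (\<lambda>n. inverse (real n))" by simp
  then show False using not_summable_harmonic by blast
qed


lemma PQH_nonneg: "(\<And>i. x i \<ge> 0) \<Longrightarrow> PQH s QQ n E x \<ge> 0"
  unfolding PQH_def by (intro mult_nonneg_nonneg sum_nonneg prod_nonneg) auto

lemma PQH_bdd:
  assumes p: "p > 0"
  shows "bdd_above {PQH s QQ n E x | x. (\<Sum>i<n. \<bar>x i\<bar> powr p) = 1}"
proof -
  let ?B = "fact s * (\<Sum>I \<in> {I. I \<subseteq> {0..<n} \<and> card I = s}. real (copies s QQ E I))"
  show ?thesis unfolding bdd_above_def
  proof (intro exI[of _ ?B] ballI)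
    fix y assume "y \<in> {PQH s QQ n E x | x. (\<Sum>i<n. \<bar>x i\<bar> powr p) = 1}"
    then obtain x where y: "y = PQH s QQ n E x" and x: "(\<Sum>i<n. \<bar>x i\<bar> powr p) = 1" by blast
    have le1: "\<bar>x i\<bar> \<le> 1" if "i < n" for i
    proof (rule ccontr)
      assume "\<not> \<bar>x i\<bar> \<le> 1"
      then have "1 < \<bar>x i\<bar> powr p" using p by (simp add: powr_less_mono2 less_le_trans[OF _ ] )
      moreover have "\<bar>x i\<bar> powr p \<le> (\<Sum>i<n. \<bar>x i\<bar> powr p)"
        by (rule member_le_sum) (use that in auto)
      ultimately show False using x by simp
    qed
    have "PQH s QQ n E x \<le> ?B" unfolding PQH_def
    proof (intro mult_left_mono sum_mono)
      fix I assume I: "I \<in> {I. I \<subseteq> {0..<n} \<and> card I = s}"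
      have "(\<Prod>i\<in>I. x i) \<le> \<bar>\<Prod>i\<in>I. x i\<bar>" by simp
      also have "\<dots> = (\<Prod>i\<in>I. \<bar>x i\<bar>)" by (simp add: abs_prod)
      also have "\<dots> \<le> 1" using I le1 by (intro prod_le_1) auto
      finally have "(\<Prod>i\<in>I. x i) \<le> 1" .
      then show "real (copies s QQ E I) * (\<Prod>i\<in>I. x i) \<le> real (copies s QQ E I)"
        using mult_left_mono[of "(\<Prod>i\<in>I. x i)" 1 "real (copies s QQ E I)"] by simp
    qed simp
    then show "y \<le> ?B" using y by simp
  qed
qed

lemma lamH_nonneg:
  assumes p: "p > 0" and n: "n \<ge> 1"
  shows "lamH p s QQ n E \<ge> 0"
proof -
  define x where "x i = (if i = 0 then 1 else (0::real))" for i :: nat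
  have "(\<Sum>i<n. \<bar>x i\<bar> powr p) = (\<Sum>i<n. if i = 0 then 1 else 0)"
    by (intro sum.cong) (auto simp: x_def)
  also have "\<dots> = 1" using n by simp
  finally have "PQH s QQ n E x \<in> {PQH s QQ n E x | x. (\<Sum>i<n. \<bar>x i\<bar> powr p) = 1}" by blast
  moreover have "PQH s QQ n E x \<ge> 0" by (rule PQH_nonneg) (simp add: x_def)
  ultimately show ?thesis unfolding lamH_def
    using PQH_bdd[OF p] by (meson cSup_upper2)
qed

lemma lamPn_nonneg:
  assumes h: "hereditary r P" and E: "(n, E) \<in> P" and p: "p > 0" and n: "n \<ge> 1"
  shows "lamPn p s QQ P n \<ge> 0"
proof -
  have sub: "{E. (n, E) \<in> P} \<subseteq> Pow (Pow {0..<n})"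
    using h unfolding hereditary_def is_rgraph_def by auto
  have fin: "finite {E. (n, E) \<in> P}" by (rule finite_subset[OF sub]) simp
  have eq: "{lamH p s QQ n E | E. (n, E) \<in> P} = lamH p s QQ n ` {E. (n, E) \<in> P}" by blast
  have bdd: "bdd_above {lamH p s QQ n E | E. (n, E) \<in> P}"
    unfolding eq using fin by (intro bdd_above_finite) auto
  have "lamH p s QQ n E \<in> {lamH p s QQ n E | E. (n, E) \<in> P}" using E by blast
  then show ?thesis unfolding lamPn_def using bdd lamH_nonneg[OF p n, of s QQ E] by (meson cSup_upper2)
qed

theorem lemma3p4:
  fixes p :: real and r s :: nat and EQ :: "nat set set"
    and P :: "(nat \<times> nat set set) set"
  assumes "p > 1" and "r \<ge> 2" and "s \<ge> r"
    and "is_rgraph r s EQ"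
    and "hereditary r P"
    and "lamP p s EQ P > 0"
  shows "infinite {n::nat.
     lamPn p s EQ P (n - 1) * real (n - 1) powr (real s / p) / falling (n - 1) s
       - lamPn p s EQ P n * real n powr (real s / p) / falling n s
     < 1 / (real n * ln (real n)) * (lamPn p s EQ P n * real n powr (real s / p) / falling n s)}"
proof (rule ccontr)
  define a where "a n = lamPn p s EQ P n * real n powr (real s / p) / falling n s" for n
  define b where "b n = lamPn p s EQ P n * real n powr (real s / p - real s)" for n
  have lamP_eq: "lamP p s EQ P = lim b" unfolding lamP_def b_def ..
  assume "\<not> ?thesis"
  then have fin: "finite {n. a (n - 1) - a n < 1 / (real n * ln (real n)) * a n}"
    unfolding a_def by simp
  then obtain m where m: "\<forall>n\<in>{n. a (n - 1) - a n < 1 / (real n * ln (real n)) * a n}. n \<le> m"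
    using finite_nat_set_iff_bounded_le by blast
  define N where "N = Suc m"
  have N: "\<not> (a (n - 1) - a n < 1 / (real n * ln (real n)) * a n)" if "n \<ge> N" for n
    using m that unfolding N_def by force
  have p0: "p > 0" using assms(1) by simp
  have s2: "s \<ge> 2" using assms(2,3) by simp
  have sp: "real s / p - real s < 0"
  proof -
    have "real s / p < real s" using assms(1) s2 by (simp add: divide_less_eq)
    then show ?thesis by simp
  qed
  show False
  proof (cases "P = {}")
    case True
    then have "b = (\<lambda>n. Sup {} * real n powr (real s / p - real s))"
      unfolding b_def lamPn_def by simp
    moreover have "(\<lambda>n. Sup {} * real n powr (real s / p - real s)) \<longlonglongrightarrow> 0"
      by (intro tendsto_mult_right_zero tendsto_neg_powr[OF sp] filterlim_real_sequentially)
    ultimately have "lim b = 0" by (simp add: limI)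
    then show False using assms(6) lamP_eq by simp
  next
    case False
    then obtain n0 E0 where E0: "(n0, E0) \<in> P" by auto
    have inP: "(n0 + k, E0) \<in> P" for k
    proof (induction k)
      case 0 then show ?case using E0 by simp
    next
      case (Suc k) then show ?case using assms(5) unfolding hereditary_def by simp
    qed
    define M where "M = N + n0 + s + 2"
    have lam0: "lamPn p s EQ P n \<ge> 0" if "n \<ge> M" for n
    proof -
      have "(n, E0) \<in> P" using inP[of "n - n0"] that unfolding M_def by simp
      then show ?thesis using lamPn_nonneg[OF assms(5) _ p0] that unfolding M_def by simp
    qed
    have fpos: "falling n s > 0" if "n \<ge> s" for n
      unfolding falling_def using that by (intro prod_pos) auto
    have fle: "falling n s \<le> real n ^ s" if "n \<ge> s" for n
    proof -
      have "falling n s \<le> (\<Prod>i<s. real n)" unfolding falling_def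
        using that by (intro prod_mono) auto
      then show ?thesis by simp
    qed
    have a0: "a n \<ge> 0" if "n \<ge> M" for n
      unfolding a_def using lam0[OF that] fpos[of n] that unfolding M_def
      by (intro divide_nonneg_pos mult_nonneg_nonneg) auto
    have xpos: "1 / (real n * ln (real n)) > 0" if "n \<ge> M" for n
      using that unfolding M_def by (intro divide_pos_pos mult_pos_pos) auto
    have step: "a (Suc n) * (1 / (real (Suc n) * ln (real (Suc n)))) \<le> a n - a (Suc n)"
      if "n \<ge> M" for n
      using N[of "Suc n"] that unfolding M_def by (simp add: mult.commute)
    have dec: "a (Suc n) \<le> a n" if "n \<ge> M" for n
    proof -
      have "0 \<le> a (Suc n) * (1 / (real (Suc n) * ln (real (Suc n))))"
        using a0[of "Suc n"] xpos[of "Suc n"] that by simp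
      then show ?thesis using step[OF that] by simp
    qed
    define c where "c k = a (M + k)" for k
    have cdec: "decseq c" unfolding c_def by (intro decseq_SucI) (simp add: dec)
    have c0: "\<forall>i. 0 \<le> c i" unfolding c_def using a0 by simp
    obtain L where cL: "c \<longlonglongrightarrow> L" "\<forall>i. L \<le> c i"
      using decseq_convergent[OF cdec c0] by blast
    have L0: "L \<ge> 0" using LIMSEQ_le_const[OF cL(1)] c0 by blast
    show False
    proof (cases "L = 0")
      case True
      have bn: "b n = a n * (falling n s / real n ^ s)" if "n \<ge> M" for n
      proof -
        have n0: "real n > 0" using that unfolding M_def by simp
        have "real n powr (real s / p - real s) = real n powr (real s / p) / real n ^ s"
          using n0 by (simp add: powr_diff powr_realpow)
        moreover have "falling n s \<noteq> 0" using fpos[of n] that unfolding M_def by simp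
        ultimately show ?thesis unfolding a_def b_def by (simp add: field_simps)
      qed
      have rat: "0 \<le> falling n s / real n ^ s \<and> falling n s / real n ^ s \<le> 1" if "n \<ge> M" for n
      proof -
        have "n \<ge> s" "real n ^ s > 0" using that unfolding M_def by auto
        then show ?thesis using fpos fle by (simp add: divide_le_eq_1 less_imp_le)
      qed
      have "(\<lambda>k. b (k + M)) \<longlonglongrightarrow> 0"
      proof (rule tendsto_sandwich[of "\<lambda>_. 0" _ _ c])
        show "\<forall>\<^sub>F k in sequentially. 0 \<le> b (k + M)"
        proof (intro always_eventually allI)
          fix k
          have "0 \<le> a (k + M) * (falling (k + M) s / real (k + M) ^ s)"
            using rat[of "k + M"] a0[of "k + M"] by (intro mult_nonneg_nonneg) auto
          then show "0 \<le> b (k + M)" using bn[of "k + M"] by simp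
        qed
        show "\<forall>\<^sub>F k in sequentially. b (k + M) \<le> c k"
        proof (intro always_eventually allI)
          fix k
          have "a (k + M) * (falling (k + M) s / real (k + M) ^ s) \<le> a (k + M) * 1"
            using rat[of "k + M"] a0[of "k + M"] by (intro mult_left_mono) auto
          then show "b (k + M) \<le> c k" using bn[of "k + M"] unfolding c_def by (simp add: add.commute)
        qed
        show "(\<lambda>_. 0) \<longlonglongrightarrow> (0::real)" by simp
        show "c \<longlonglongrightarrow> 0" using cL(1) True by simp
      qed
      then have "b \<longlonglongrightarrow> 0" by (rule LIMSEQ_offset)
      then have "lim b = 0" by (rule limI)
      then show False using assms(6) lamP_eq by simp
    next
      case False
      with L0 have Lpos: "L > 0" by simp
      define y where "y k = 1 / (real (k + (M + 1)) * ln (real (k + (M + 1))))" for k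
      have ynn: "y k \<ge> 0" for k using xpos[of "k + (M + 1)"] unfolding y_def by simp
      have ystep: "L * y k \<le> c k - c (Suc k)" for k
      proof -
        have "L * y k \<le> c (Suc k) * y k" using cL(2) ynn[of k] by (intro mult_right_mono) auto
        also have "\<dots> \<le> c k - c (Suc k)"
          using step[of "M + k"] unfolding c_def y_def by (simp add: add.commute add.left_commute)
        finally show ?thesis .
      qed
      have bnd: "(\<Sum>k<K. y k) \<le> c 0 / L" for K
      proof -
        have "L * (\<Sum>k<K. y k) = (\<Sum>k<K. L * y k)" by (simp add: sum_distrib_left)
        also have "\<dots> \<le> (\<Sum>k<K. c k - c (Suc k))" by (intro sum_mono ystep)
        also have "\<dots> = c 0 - c K" by (rule sum_lessThan_telescope')
        also have "\<dots> \<le> c 0" using c0 by simp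
        finally show ?thesis using Lpos by (simp add: field_simps)
      qed
      have "summable y" by (rule summableI_nonneg_bounded[OF ynn bnd])
      then have "summable (\<lambda>k. 1 / (real (k + (M + 1)) * ln (real (k + (M + 1)))))"
        unfolding y_def .
      then have "summable (\<lambda>n::nat. 1 / (real n * ln (real n)))"
        by (rule summable_iff_shift[THEN iffD1])
      then show False using div_harm_ln by blast
    qed
  qed
qed

end
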